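(* Let $\mathcal G=(\mathcal N,E)$ be an undirected graph on $N$ nodes with adjacency-type matrix $A$ (defined in the context), and let $x^\star$ be any solution of the fractional dominating set linear program $$\min_{x\in\mathbb R^N}\mathbf 1^\top x\quad\text{s.t.}\quad Ax\ge\mathbf 1,\ x\ge 0.$$ Run Algorithm 1 (described in the context) with an arbitrary $\delta>0$ and $\alpha=\frac{\delta}{2(d_{\max}+1)^2}$. Then for every $k=0,1,2,\dots$ the iterate $x^{(k)}=(x^{(k)}_1,\dots,x^{(k)}_N)^\top$ is feasible for this linear program (i.e. $Ax^{(k)}\ge\mathbf 1$ and $x^{(k)}\ge 0$), and $$\frac{\mathbf 1^\top x^{(k)}-\mathbf 1^\top x^\star}{\mathbf 1^\top x^\star}\le 32(d_{\max}+1)^3\Big(1+\frac1\delta\Big)\frac{1}{(k+1)^2}+\frac{\delta}{2}.$$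
   Context: $A$ is the $N\times N$ symmetric matrix with $A_{ii}=1$ for all $i$ and, for $i\ne j$, $A_{ij}=1$ if $\{i,j\}\in E$, $A_{ij}=0$ otherwise. $\Omega_i$ is the closed one-hop neighborhood of node $i$ (its neighbors together with $i$). $d_{\max}$ is the maximal degree of $\mathcal G$, where the degree of $i$ is its number of neighbors excluding $i$, i.e. $|\Omega_i|-1$. $\mathbf 1$ is the all-ones vector, $[c]_+=\max\{0,c\}$, and $\mathcal P_{[0,1]}(c)=\min\{1,\max\{0,c\}\}$. Algorithm 1: initialize $\lambda_i^{(0)}=0$ and $z_i^{(-1)}=0$ for all $i$ (the value of $\overline x_j^{(-1)}$ is irrelevant since it is multiplied by $0$). For $k=0,1,2,\dots$, each node $i$ computes $$\widehat x_i^{(k)}=\mathcal P_{[0,1]}\Big(\tfrac1\delta\big(\textstyle\sum_{j\in\Omega_i}\lambda_j^{(k)}-1\big)\Big),$$ and then $$z_i^{(k)}=z_i^{(k-1)}+\tfrac{k+1}{2}\Big(1-\textstyle\sum_{j\in\Omega_i}\widehat x_j^{(k)}\Big),\qquad \mu_i^{(k)}=\Big[\lambda_i^{(k)}+\alpha\big(1-\textstyle\sum_{j\in\Omega_i}\widehat x_j^{(k)}\big)\Big]_+,$$ $$\lambda_i^{(k+1)}=\tfrac{k+1}{k+3}\mu_i^{(k)}+\tfrac{2}{k+3}\,\alpha\,[z_i^{(k)}]_+,\qquad \overline x_j^{(k)}=\tfrac{k}{k+2}\overline x_j^{(k-1)}+\tfrac{2}{k+2}\widehat x_j^{(k)},$$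 $$x_i^{(k)}=\overline x_i^{(k)}+\Big[1-\textstyle\sum_{j\in\Omega_i}\overline x_j^{(k)}\Big]_+ .$$ *)

theory Defs
  imports Complex_Main
begin

definition is_graph :: "nat \<Rightarrow> nat set set \<Rightarrow> bool" where
  "is_graph N E \<longleftrightarrow> (\<forall>e\<in>E. \<exists>i j. e = {i, j} \<and> i \<noteq> j \<and> i < N \<and> j < N)"

definition adjA :: "nat set set \<Rightarrow> nat \<Rightarrow> nat \<Rightarrow> real" where
  "adjA E i j = (if i = j then 1 else if {i, j} \<in> E then 1 else 0)"

definition Omega :: "nat \<Rightarrow> nat set set \<Rightarrow> nat \<Rightarrow> nat set" where
  "Omega N E i = {j. j < N \<and> (j = i \<or> {i, j} \<in> E)}"

definition dmax :: "nat \<Rightarrow> nat set set \<Rightarrow> nat" where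
  "dmax N E = Max ((\<lambda>i. card (Omega N E i) - 1) ` {..<N})"

definition fds_feasible :: "nat \<Rightarrow> nat set set \<Rightarrow> (nat \<Rightarrow> real) \<Rightarrow> bool" where
  "fds_feasible N E x \<longleftrightarrow>
     (\<forall>i<N. (\<Sum>j<N. adjA E i j * x j) \<ge> 1) \<and> (\<forall>i<N. x i \<ge> 0)"

definition fds_optimal :: "nat \<Rightarrow> nat set set \<Rightarrow> (nat \<Rightarrow> real) \<Rightarrow> bool" where
  "fds_optimal N E x \<longleftrightarrow> fds_feasible N E x \<and>
     (\<forall>y. fds_feasible N E y \<longrightarrow> (\<Sum>i<N. x i) \<le> (\<Sum>i<N. y i))"

definition proj01 :: "real \<Rightarrow> real" where
  "proj01 c = min 1 (max 0 c)"

definition pos :: "real \<Rightarrow> real" where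
  "pos c = max 0 c"

definition xhat :: "nat \<Rightarrow> nat set set \<Rightarrow> real \<Rightarrow> (nat \<Rightarrow> real) \<Rightarrow> nat \<Rightarrow> real" where
  "xhat N E \<delta> lam i = proj01 ((1 / \<delta>) * ((\<Sum>j\<in>Omega N E i. lam j) - 1))"

text \<open>alg_state k = (lambda^(k), z^(k-1), xbar^(k-1)), with lambda^(0)=0, z^(-1)=0, xbar^(-1)=0
  (the value of xbar^(-1) is irrelevant).\<close>
fun alg_state :: "nat \<Rightarrow> nat set set \<Rightarrow> real \<Rightarrow> real \<Rightarrow> nat \<Rightarrow>
    (nat \<Rightarrow> real) \<times> (nat \<Rightarrow> real) \<times> (nat \<Rightarrow> real)" where
  "alg_state N E \<delta> \<alpha> 0 = ((\<lambda>_. 0), (\<lambda>_. 0), (\<lambda>_. 0))"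
| "alg_state N E \<delta> \<alpha> (Suc k) =
     (let (lam, z, xb) = alg_state N E \<delta> \<alpha> k;
          xh = xhat N E \<delta> lam;
          r = (\<lambda>i. 1 - (\<Sum>j\<in>Omega N E i. xh j));
          z' = (\<lambda>i. z i + (real k + 1) / 2 * r i);
          mu = (\<lambda>i. pos (lam i + \<alpha> * r i));
          lam' = (\<lambda>i. (real k + 1) / (real k + 3) * mu i + 2 / (real k + 3) * \<alpha> * pos (z' i));
          xb' = (\<lambda>j. real k / (real k + 2) * xb j + 2 / (real k + 2) * xh j)
      in (lam', z', xb'))"

definition xbar :: "nat \<Rightarrow> nat set set \<Rightarrow> real \<Rightarrow> real \<Rightarrow> nat \<Rightarrow> nat \<Rightarrow> real" where
  "xbar N E \<delta> \<alpha> k = snd (snd (alg_state N E \<delta> \<alpha> (Suc k)))"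

definition alg_x :: "nat \<Rightarrow> nat set set \<Rightarrow> real \<Rightarrow> real \<Rightarrow> nat \<Rightarrow> nat \<Rightarrow> real" where
  "alg_x N E \<delta> \<alpha> k i =
     xbar N E \<delta> \<alpha> k i + pos (1 - (\<Sum>j\<in>Omega N E i. xbar N E \<delta> \<alpha> k j))"

end

theory Submission
  imports Defs "HOL-Analysis.Convex"
begin


lemma proj_opt:
  fixes \<delta> c y :: real
  assumes d: "\<delta> > 0" and y: "0 \<le> y" "y \<le> 1" and p: "p = proj01 ((1/\<delta>) * (c - 1))"
  shows "p + \<delta>/2*p^2 - c*p + \<delta>/2*(y-p)^2 \<le> y + \<delta>/2*y^2 - c*y"
proof -
  have eq: "y + \<delta>/2*y^2 - c*y - (p + \<delta>/2*p^2 - c*p + \<delta>/2*(y-p)^2) = (1 - c + \<delta>*p)*(y-p)"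
    by (simp add: algebra_simps power2_eq_square)
  have "(1 - c + \<delta>*p)*(y-p) \<ge> 0"
  proof (cases "(1/\<delta>) * (c - 1) \<le> 0")
    case True
    then have "p = 0" using p by (simp add: proj01_def)
    moreover have "c \<le> 1" using True d by (auto simp: divide_le_0_iff)
    ultimately show ?thesis using y by simp
  next
    case False
    show ?thesis
    proof (cases "(1/\<delta>) * (c - 1) \<ge> 1")
      case True
      then have "p = 1" using p by (simp add: proj01_def)
      moreover have "c - 1 \<ge> \<delta>" using True d by (simp add: field_simps)
      ultimately show ?thesis using y by (simp add: mult_nonpos_nonpos)
    next
      case F2: False
      then have "p = (1/\<delta>) * (c - 1)" using p False by (simp add: proj01_def)
      then have "\<delta>*p = c - 1" using d by simp
      then show ?thesis by simp
    qed
  qed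
  then show ?thesis using eq by linarith
qed

lemma proj01_range: "0 \<le> proj01 c" "proj01 c \<le> 1"
  by (auto simp: proj01_def)

lemma S_scalar:
  fixes \<alpha> l z :: real
  assumes "\<alpha> > 0" "l \<ge> 0"
  shows "l*z - l^2/(2*\<alpha>) + (l - \<alpha>*pos z)^2/(2*\<alpha>) \<le> (\<alpha>*pos z)*z - (\<alpha>*pos z)^2/(2*\<alpha>)"
proof -
  have "l*z - l^2/(2*\<alpha>) + (l - \<alpha>*pos z)^2/(2*\<alpha>) - ((\<alpha>*pos z)*z - (\<alpha>*pos z)^2/(2*\<alpha>))
        = (z - pos z)*(l - \<alpha> * pos z)"
    using assms by (simp add: field_simps power2_eq_square)
  also have "\<dots> \<le> 0"
    using assms by (cases "z \<ge> 0") (auto simp: pos_def mult_nonpos_nonneg)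
  finally show ?thesis by simp
qed

lemma maxq_scalar:
  fixes \<alpha> g u l :: real
  assumes "\<alpha> > 0" "u \<ge> 0"
  shows "g*(u-l) - (u-l)^2/(2*\<alpha>) \<le> g*(pos (l+\<alpha>*g) - l) - (pos (l+\<alpha>*g) - l)^2/(2*\<alpha>)"
proof -
  define m where "m = l + \<alpha>*g"
  have e: "\<And>w. g*(w-l) - (w-l)^2/(2*\<alpha>) = \<alpha>*g^2/2 - (w - m)^2/(2*\<alpha>)"
    using assms by (simp add: m_def field_simps power2_eq_square)
  have "(pos m - m)^2 \<le> (u - m)^2"
    proof (cases "m \<ge> 0")
    case True then show ?thesis by (simp add: pos_def)
  next
    case False
    then have "0 \<le> 0 - m" "0 - m \<le> u - m" using assms by auto
    then have "(0 - m)^2 \<le> (u-m)^2" using power_mono[of "0 - m" "u - m" 2] by linarith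
    then show ?thesis using False by (simp add: pos_def)
  qed
  then have "(pos m - m)^2/(2*\<alpha>) \<le> (u - m)^2/(2*\<alpha>)"
    using assms by (simp add: divide_right_mono)
  then show ?thesis unfolding e m_def[symmetric] by linarith
qed

lemma quad_scalar:
  fixes c s :: real assumes "c > 0" shows "s - c*s^2/2 \<le> 1/(2*c)"
proof -
  have "1/(2*c) - (s - c*s^2/2) = (c*s - 1)^2/(2*c)"
    using assms by (simp add: field_simps power2_eq_square)
  moreover have "(c*s - 1)^2/(2*c) \<ge> 0" using assms by simp
  ultimately show ?thesis by linarith
qed

lemma amgm_scalar:
  fixes a b \<delta> :: real assumes "\<delta> > 0" shows "a*b \<le> \<delta>/2*a^2 + b^2/(2*\<delta>)"
proof -
  have "\<delta>/2*a^2 + b^2/(2*\<delta>) - a*b = (\<delta>*a - b)^2/(2*\<delta>)"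
    using assms by (simp add: field_simps power2_eq_square)
  moreover have "(\<delta>*a - b)^2/(2*\<delta>) \<ge> 0" using assms by simp
  ultimately show ?thesis by linarith
qed



locale fds =
  fixes N :: nat and E :: "nat set set" and \<delta> \<alpha> :: real
  assumes dpos: "\<delta> > 0" and adef: "\<alpha> = \<delta> / (2 * (real (dmax N E) + 1) ^ 2)"
begin

abbreviation Om where "Om i \<equiv> Omega N E i"
definition "D = real (dmax N E) + 1"
definition Ax :: "(nat \<Rightarrow> real) \<Rightarrow> nat \<Rightarrow> real" where "Ax v i = (\<Sum>j\<in>Om i. v j)"
definition "ff x = (\<Sum>j<N. x j + \<delta>/2 * (x j)^2)"
definition "gg x i = 1 - Ax x i"
definition "Lg x l = ff x + (\<Sum>i<N. l i * gg x i)"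
definition "xh l = xhat N E \<delta> l"
definition "dd l = Lg (xh l) l"
definition nrm :: "(nat \<Rightarrow> real) \<Rightarrow> real" where "nrm w = (\<Sum>i<N. (w i)^2)"

lemma Dpos: "D \<ge> 1" by (simp add: D_def)
lemma apos: "\<alpha> > 0" using dpos by (simp add: adef)
lemma aD: "\<alpha> = \<delta> / (2 * D^2)" by (simp add: adef D_def)

lemma Om_eq: "Om i = {j\<in>{..<N}. j = i \<or> {i,j} \<in> E}"
  by (auto simp: Omega_def)
lemma fin_Om: "finite (Om i)" by (simp add: Om_eq)
lemma Om_sub: "Om i \<subseteq> {..<N}" by (auto simp: Omega_def)
lemma self_Om: "i < N \<Longrightarrow> i \<in> Om i" by (simp add: Omega_def)
lemma Om_sym: "i < N \<Longrightarrow> j < N \<Longrightarrow> j \<in> Om i \<longleftrightarrow> i \<in> Om j"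
  by (auto simp: Omega_def insert_commute)

lemma sum_Om: "(\<Sum>j\<in>Om i. F j) = (\<Sum>j<N. if j \<in> Om i then F j else 0)"
proof -
  have "{..<N} \<inter> Om i = Om i" using Om_sub by auto
  then show ?thesis using sum.inter_restrict[of "{..<N}" F "Om i"] by simp
qed

lemma swap: "(\<Sum>i<N. \<Sum>j\<in>Om i. F i j) = (\<Sum>j<N. \<Sum>i\<in>Om j. F i j)"
proof -
  have "(\<Sum>i<N. \<Sum>j\<in>Om i. F i j) = (\<Sum>i<N. \<Sum>j<N. if j \<in> Om i then F i j else 0)"
    by (simp add: sum_Om)
  also have "\<dots> = (\<Sum>j<N. \<Sum>i<N. if j \<in> Om i then F i j else 0)"
    by (rule sum.swap)
  also have "\<dots> = (\<Sum>j<N. \<Sum>i<N. if i \<in> Om j then F i j else 0)"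
    by (intro sum.cong refl) (simp add: Om_sym)
  also have "\<dots> = (\<Sum>j<N. \<Sum>i\<in>Om j. F i j)"
    by (simp add: sum_Om)
  finally show ?thesis .
qed

lemma card_Om: "i < N \<Longrightarrow> real (card (Om i)) \<le> D"
proof -
  assume i: "i < N"
  have "card (Om i) \<ge> 1" using self_Om[OF i] fin_Om
    by (metis One_nat_def Suc_leI card_gt_0_iff empty_iff)
  moreover have "card (Om i) - 1 \<le> dmax N E"
    unfolding dmax_def using i by (intro Max_ge) auto
  ultimately have "card (Om i) \<le> dmax N E + 1" by linarith
  then show ?thesis unfolding D_def by (metis of_nat_1 of_nat_add of_nat_le_iff)
qed

lemma Ax_sq: "nrm (Ax w) \<le> D^2 * nrm w"
proof -
  have "nrm (Ax w) \<le> (\<Sum>i<N. D * (\<Sum>j\<in>Om i. (w j)^2))"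
    unfolding nrm_def
  proof (intro sum_mono)
    fix i assume "i \<in> {..<N}"
    then have i: "i < N" by simp
    have "(Ax w i)^2 \<le> (\<Sum>j\<in>Om i. (w j)^2) * card (Om i)"
      unfolding Ax_def by (rule sum_squared_le_sum_of_squares)
    also have "\<dots> \<le> (\<Sum>j\<in>Om i. (w j)^2) * D"
      using card_Om[OF i] by (intro mult_left_mono) (auto intro: sum_nonneg)
    finally show "(Ax w i)^2 \<le> D * (\<Sum>j\<in>Om i. (w j)^2)" by (simp add: mult.commute)
  qed
  also have "\<dots> = D * (\<Sum>i<N. \<Sum>j\<in>Om i. (w j)^2)"
    by (simp add: sum_distrib_left)
  also have "\<dots> = D * (\<Sum>j<N. \<Sum>i\<in>Om j. (w j)^2)"
    using swap[where F="\<lambda>i j. (w j)^2"] by simp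
  also have "\<dots> = D * (\<Sum>j<N. card (Om j) * (w j)^2)" by simp
  also have "\<dots> \<le> D * (\<Sum>j<N. D * (w j)^2)"
    using Dpos card_Om by (intro mult_left_mono sum_mono mult_right_mono) auto
  also have "\<dots> = D^2 * nrm w" by (simp add: nrm_def sum_distrib_left power2_eq_square mult.assoc)
  finally show ?thesis .
qed

lemma nrm_nonneg: "nrm w \<ge> 0" by (simp add: nrm_def sum_nonneg)

lemma xh_eq: "xh l j = proj01 ((1/\<delta>) * (Ax l j - 1))"
  by (simp add: xh_def xhat_def Ax_def)
lemma xh_range: "0 \<le> xh l j" "xh l j \<le> 1"
  by (simp_all add: xh_eq proj01_range)

lemma Lg_rewrite: "Lg x l = (\<Sum>j<N. x j + \<delta>/2 * (x j)^2 - x j * Ax l j) + (\<Sum>i<N. l i)"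
proof -
  have "(\<Sum>i<N. l i * gg x i) = (\<Sum>i<N. l i) - (\<Sum>i<N. \<Sum>j\<in>Om i. l i * x j)"
    by (simp add: gg_def Ax_def algebra_simps sum_subtractf sum_distrib_left)
  also have "(\<Sum>i<N. \<Sum>j\<in>Om i. l i * x j) = (\<Sum>j<N. x j * Ax l j)"
    unfolding swap[where F="\<lambda>i j. l i * x j"] by (simp add: Ax_def sum_distrib_left mult.commute)
  finally show ?thesis by (simp add: Lg_def ff_def sum_subtractf)
qed

lemma F1: assumes x: "\<And>j. j < N \<Longrightarrow> 0 \<le> x j \<and> x j \<le> 1"
  shows "dd l + \<delta>/2 * nrm (\<lambda>j. x j - xh l j) \<le> Lg x l"
proof -
  have "(\<Sum>j<N. xh l j + \<delta>/2 * (xh l j)^2 - xh l j * Ax l j) + \<delta>/2 * nrm (\<lambda>j. x j - xh l j)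
     = (\<Sum>j<N. xh l j + \<delta>/2 * (xh l j)^2 - Ax l j * xh l j + \<delta>/2*(x j - xh l j)^2)"
    by (simp add: nrm_def sum.distrib sum_distrib_left mult.commute)
  also have "\<dots> \<le> (\<Sum>j<N. x j + \<delta>/2 * (x j)^2 - Ax l j * x j)"
    using x dpos by (intro sum_mono proj_opt) (auto simp: xh_eq)
  finally show ?thesis unfolding dd_def Lg_rewrite by (simp add: mult.commute)
qed

lemma F1w: assumes "\<And>j. j < N \<Longrightarrow> 0 \<le> x j \<and> x j \<le> 1" shows "dd l \<le> Lg x l"
proof -
  have "dd l + \<delta>/2 * nrm (\<lambda>j. x j - xh l j) \<le> Lg x l" by (rule F1) (use assms in auto)
  moreover have "\<delta>/2 * nrm (\<lambda>j. x j - xh l j) \<ge> 0" using dpos nrm_nonneg by simp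
  ultimately show ?thesis by linarith
qed

end

context fds begin

lemma Lg_shift: "Lg x m = Lg x l + (\<Sum>i<N. (m i - l i) * gg x i)"
proof -
  have "(\<Sum>i<N. m i * gg x i) = (\<Sum>i<N. l i * gg x i + (m i - l i) * gg x i)"
    by (intro sum.cong) (auto simp: algebra_simps)
  then show ?thesis by (simp add: Lg_def sum.distrib)
qed

lemma Ax_diff: "Ax u i - Ax v i = Ax (\<lambda>j. u j - v j) i"
  by (simp add: Ax_def sum_subtractf)

lemma nrm_div: "nrm w / c = (\<Sum>i<N. (w i)^2 / c)"
  by (simp add: nrm_def sum_divide_distrib)

lemma descent: "dd l + (\<Sum>i<N. gg (xh l) i * (m i - l i)) - nrm (\<lambda>i. m i - l i)/(2*\<alpha>) \<le> dd m"
proof -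
  define w where "w = (\<lambda>i. m i - l i)"
  define \<Delta> where "\<Delta> = (\<lambda>j. xh m j - xh l j)"
  have 1: "Lg (xh l) m = dd l + (\<Sum>i<N. gg (xh l) i * w i)"
    using Lg_shift[of "xh l" m l] by (simp add: dd_def w_def mult.commute)
  have 2: "dd m = Lg (xh m) l + (\<Sum>i<N. w i * gg (xh m) i)"
    using Lg_shift[of "xh m" m l] by (simp add: dd_def w_def)
  have ggd: "\<And>i. gg (xh m) i = gg (xh l) i - Ax \<Delta> i"
  proof -
    fix i show "gg (xh m) i = gg (xh l) i - Ax \<Delta> i"
      using Ax_diff[of "xh m" i "xh l"] by (simp add: gg_def \<Delta>_def)
  qed
  have 22: "(\<Sum>i<N. w i * gg (xh m) i) = (\<Sum>i<N. gg (xh l) i * w i) - (\<Sum>i<N. w i * Ax \<Delta> i)"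
    by (simp add: ggd algebra_simps sum_subtractf)
  have 3: "dd l + \<delta>/2 * nrm \<Delta> \<le> Lg (xh m) l"
    unfolding \<Delta>_def by (rule F1) (simp add: xh_range)
  have 4: "(\<Sum>i<N. w i * Ax \<Delta> i) = (\<Sum>j<N. \<Delta> j * Ax w j)"
  proof -
    have "(\<Sum>i<N. w i * Ax \<Delta> i) = (\<Sum>i<N. \<Sum>j\<in>Om i. w i * \<Delta> j)"
      by (simp add: Ax_def sum_distrib_left)
    also have "\<dots> = (\<Sum>j<N. \<Sum>i\<in>Om j. w i * \<Delta> j)" by (rule swap)
    also have "\<dots> = (\<Sum>j<N. \<Delta> j * Ax w j)"
      by (simp add: Ax_def sum_distrib_left mult.commute)
    finally show ?thesis .
  qed
  have 5: "(\<Sum>j<N. \<Delta> j * Ax w j) \<le> \<delta>/2 * nrm \<Delta> + nrm (Ax w)/(2*\<delta>)"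
  proof -
    have "(\<Sum>j<N. \<Delta> j * Ax w j) \<le> (\<Sum>j<N. \<delta>/2*(\<Delta> j)^2 + (Ax w j)^2/(2*\<delta>))"
      using dpos by (intro sum_mono amgm_scalar)
    also have "\<dots> = \<delta>/2 * nrm \<Delta> + nrm (Ax w)/(2*\<delta>)"
      by (simp add: nrm_def sum.distrib sum_distrib_left sum_divide_distrib)
    finally show ?thesis .
  qed
  have 6: "nrm (Ax w)/(2*\<delta>) \<le> nrm w/(2*\<alpha>)"
  proof -
    have "nrm (Ax w)/(2*\<delta>) \<le> D^2 * nrm w/(2*\<delta>)"
      using Ax_sq[of w] dpos by (simp add: divide_right_mono)
    also have "\<dots> \<le> D^2 * nrm w / \<delta>"
      using dpos nrm_nonneg[of w] by (simp add: field_simps)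
    also have "\<dots> = nrm w/(2*\<alpha>)"
      using dpos Dpos by (simp add: aD field_simps)
    finally show ?thesis .
  qed
  have 7: "(\<Sum>i<N. gg (xh l) i * (m i - l i)) = (\<Sum>i<N. gg (xh l) i * w i)" by (simp add: w_def)
  show ?thesis using 2 22 3 4 5 6 7 unfolding w_def[symmetric] by linarith
qed

lemma Qmax: assumes u: "\<And>i. i < N \<Longrightarrow> u i \<ge> 0"
  shows "dd l + (\<Sum>i<N. gg (xh l) i * (u i - l i)) - nrm (\<lambda>i. u i - l i)/(2*\<alpha>)
         \<le> dd (\<lambda>i. pos (l i + \<alpha> * gg (xh l) i))"
proof -
  define m where "m = (\<lambda>i. pos (l i + \<alpha> * gg (xh l) i))"
  have "(\<Sum>i<N. gg (xh l) i * (u i - l i)) - nrm (\<lambda>i. u i - l i)/(2*\<alpha>)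
      = (\<Sum>i<N. gg (xh l) i * (u i - l i) - (u i - l i)^2/(2*\<alpha>))"
    by (simp add: nrm_div sum_subtractf)
  also have "\<dots> \<le> (\<Sum>i<N. gg (xh l) i * (m i - l i) - (m i - l i)^2/(2*\<alpha>))"
    unfolding m_def using u apos by (intro sum_mono maxq_scalar) auto
  also have "\<dots> = (\<Sum>i<N. gg (xh l) i * (m i - l i)) - nrm (\<lambda>i. m i - l i)/(2*\<alpha>)"
    by (simp add: nrm_div sum_subtractf)
  finally show ?thesis using descent[of l m] unfolding m_def by linarith
qed

end

context fds begin

definition "lam k = fst (alg_state N E \<delta> \<alpha> k)"
definition "zz k = fst (snd (alg_state N E \<delta> \<alpha> (Suc k)))"
definition "mu k = (\<lambda>i. pos (lam k i + \<alpha> * gg (xh (lam k)) i))"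
definition "vv k = (\<lambda>i. \<alpha> * pos (zz k i))"
definition "aa t = (real t + 1)/2"
definition "AA k = (real k + 1)*(real k + 2)/4"
abbreviation "xb k \<equiv> xbar N E \<delta> \<alpha> k"

lemma lam_0: "lam 0 = (\<lambda>_. 0)" by (simp add: lam_def)

lemma lam_Suc: "lam (Suc k) i = (real k+1)/(real k+3) * mu k i + 2/(real k+3) * vv k i"
  by (cases "alg_state N E \<delta> \<alpha> k")
     (simp add: lam_def zz_def mu_def vv_def xh_def gg_def Ax_def Let_def)

lemma zz_0: "zz 0 i = 1/2 * gg (xh (lam 0)) i"
  by (simp add: lam_def zz_def xh_def gg_def Ax_def Let_def)

lemma zz_Suc: "zz (Suc k) i = zz k i + (real k + 2)/2 * gg (xh (lam (Suc k))) i"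
  by (cases "alg_state N E \<delta> \<alpha> (Suc k)")
     (simp add: lam_def zz_def xh_def gg_def Ax_def Let_def del: alg_state.simps(2), simp add: Let_def)

lemma xb_0: "xb 0 j = xh (lam 0) j"
  by (simp add: lam_def xbar_def xh_def Let_def)

lemma xb_Suc: "xb (Suc k) j = (real k + 1)/(real k + 3) * xb k j + 2/(real k + 3) * xh (lam (Suc k)) j"
  by (cases "alg_state N E \<delta> \<alpha> (Suc k)")
     (simp add: lam_def xbar_def xh_def Let_def del: alg_state.simps(2), simp add: Let_def add.commute)

end

context fds begin

lemma AA_Suc: "AA (Suc k) = AA k + aa (Suc k)"
  by (simp add: AA_def aa_def field_simps)
lemma AA_0: "AA 0 = aa 0" by (simp add: AA_def aa_def)
lemma AA_pos: "AA k > 0" by (simp add: AA_def)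

lemma AA_sum: "(\<Sum>t\<le>k. aa t) = AA k"
  by (induction k) (simp_all add: AA_0 AA_Suc)

lemma Zinv: "zz k i = (\<Sum>t\<le>k. aa t * gg (xh (lam t)) i)"
  by (induction k) (simp_all add: zz_0 zz_Suc aa_def)

lemma XBinv: "AA k * xb k j = (\<Sum>t\<le>k. aa t * xh (lam t) j)"
proof (induction k)
  case 0 then show ?case by (simp add: xb_0 AA_0)
next
  case (Suc k)
  have c1: "AA (Suc k) * ((real k + 1)/(real k + 3)) = AA k"
    by (simp add: AA_def field_simps)
  have c2: "AA (Suc k) * (2/(real k + 3)) = aa (Suc k)"
    by (simp add: AA_def aa_def field_simps)
  have "AA (Suc k) * xb (Suc k) j = AA (Suc k) * ((real k + 1)/(real k + 3)) * xb k j
        + AA (Suc k) * (2/(real k + 3)) * xh (lam (Suc k)) j"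
    by (simp add: xb_Suc algebra_simps)
  also have "\<dots> = AA k * xb k j + aa (Suc k) * xh (lam (Suc k)) j" by (simp only: c1 c2)
  finally show ?case using Suc by simp
qed

lemma mu_nn: "mu k i \<ge> 0" by (simp add: mu_def pos_def)
lemma vv_nn: "vv k i \<ge> 0" using apos by (simp add: vv_def pos_def)
lemma lam_nn: "lam k i \<ge> 0"
  by (cases k) (simp_all add: lam_0 lam_Suc mu_nn vv_nn)
lemma xb_nn: "xb k j \<ge> 0"
proof -
  have "AA k * xb k j \<ge> 0" unfolding XBinv
    by (intro sum_nonneg mult_nonneg_nonneg) (auto simp: aa_def xh_range)
  then show ?thesis using AA_pos[of k] by (simp add: zero_le_mult_iff)
qed

definition "Phi k l = (\<Sum>t\<le>k. aa t * Lg (xh (lam t)) l) - nrm l/(2*\<alpha>)"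

lemma Phi_form: "Phi k l = (\<Sum>t\<le>k. aa t * ff (xh (lam t))) + (\<Sum>i<N. l i * zz k i - (l i)^2/(2*\<alpha>))"
proof -
  have "(\<Sum>t\<le>k. aa t * Lg (xh (lam t)) l) = (\<Sum>t\<le>k. aa t * ff (xh (lam t)))
         + (\<Sum>t\<le>k. \<Sum>i<N. l i * (aa t * gg (xh (lam t)) i))"
    by (simp add: Lg_def algebra_simps sum.distrib sum_distrib_left)
  also have "(\<Sum>t\<le>k. \<Sum>i<N. l i * (aa t * gg (xh (lam t)) i)) = (\<Sum>i<N. \<Sum>t\<le>k. l i * (aa t * gg (xh (lam t)) i))"
    by (rule sum.swap)
  also have "\<dots> = (\<Sum>i<N. l i * zz k i)"
    by (simp add: Zinv sum_distrib_left)
  finally show ?thesis by (simp add: Phi_def nrm_div sum_subtractf)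
qed

lemma Sprop: assumes l: "\<And>i. i < N \<Longrightarrow> l i \<ge> 0"
  shows "Phi k l + nrm (\<lambda>i. l i - vv k i)/(2*\<alpha>) \<le> Phi k (vv k)"
proof -
  have "(\<Sum>i<N. l i * zz k i - (l i)^2/(2*\<alpha>)) + nrm (\<lambda>i. l i - vv k i)/(2*\<alpha>)
     = (\<Sum>i<N. l i * zz k i - (l i)^2/(2*\<alpha>) + (l i - \<alpha> * pos (zz k i))^2/(2*\<alpha>))"
    by (simp add: nrm_div sum.distrib vv_def)
  also have "\<dots> \<le> (\<Sum>i<N. (\<alpha> * pos (zz k i)) * zz k i - (\<alpha> * pos (zz k i))^2/(2*\<alpha>))"
    using l apos by (intro sum_mono S_scalar) auto
  finally show ?thesis by (simp add: Phi_form vv_def)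
qed

end

context fds begin

lemma Lg_comb: assumes "A + b > 0"
  shows "A * Lg x m + b * Lg x v = (A+b) * Lg x (\<lambda>i. (A*m i + b*v i)/(A+b))"
proof -
  have "(A+b) * (\<Sum>i<N. (A*m i + b*v i)/(A+b) * gg x i) = (\<Sum>i<N. A*(m i * gg x i) + b*(v i * gg x i))"
    unfolding sum_distrib_left using assms by (intro sum.cong) (auto simp: field_simps)
  then show ?thesis unfolding Lg_def by (simp add: algebra_simps sum.distrib sum_distrib_left)
qed

lemma Lg_xh: "Lg (xh l) m = dd l + (\<Sum>i<N. gg (xh l) i * (m i - l i))"
  using Lg_shift[of "xh l" m l] by (simp add: dd_def mult.commute)

lemma nrm_scale: "nrm (\<lambda>i. c * w i) = c^2 * nrm w"
  by (simp add: nrm_def sum_distrib_left power_mult_distrib)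

lemma Main: "Phi k (vv k) \<le> AA k * dd (mu k)"
proof (induction k)
  case 0
  define G where "G = (\<Sum>i<N. gg (xh (lam 0)) i * (vv 0 i - lam 0 i))"
  define X where "X = nrm (vv 0)/(2*\<alpha>)"
  have q: "dd (lam 0) + G - nrm (\<lambda>i. vv 0 i - lam 0 i)/(2*\<alpha>) \<le> dd (mu 0)"
    unfolding G_def mu_def by (rule Qmax) (simp add: vv_nn)
  have eqn: "nrm (\<lambda>i. vv 0 i - lam 0 i) = nrm (vv 0)" by (simp add: lam_0)
  have q': "dd (lam 0) + G - X \<le> dd (mu 0)" using q unfolding eqn X_def .
  have X0: "X \<ge> 0" using nrm_nonneg apos by (simp add: X_def)
  have "Phi 0 (vv 0) = 1/2 * (dd (lam 0) + G) - X"
    by (simp add: Phi_def aa_def Lg_xh G_def X_def)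
  also have "\<dots> \<le> 1/2 * (dd (lam 0) + G - X)" using X0 by simp
  also have "\<dots> \<le> 1/2 * dd (mu 0)" using q' by simp
  also have "\<dots> = AA 0 * dd (mu 0)" by (simp add: AA_def)
  finally show ?case .
next
  case (Suc k)
  define A where "A = AA k"
  define b where "b = aa (Suc k)"
  define A' where "A' = AA (Suc k)"
  define v where "v = vv k"
  define v' where "v' = vv (Suc k)"
  define \<mu> where "\<mu> = mu k"
  define l' where "l' = lam (Suc k)"
  define x' where "x' = xh l'"
  define u where "u = (\<lambda>i. (A * \<mu> i + b * v' i)/A')"
  define G where "G = (\<Sum>i<N. gg x' i * (u i - l' i))"
  have A'eq: "A' = A + b" by (simp add: A'_def A_def b_def AA_Suc)
  have Apos: "A > 0" "A' > 0" by (simp_all add: A_def A'_def AA_pos)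
  have p1: "Phi (Suc k) v' = Phi k v' + b * Lg x' v'"
    by (simp add: Phi_def b_def x'_def l'_def)
  have p2: "Phi k v' + nrm (\<lambda>i. v' i - v i)/(2*\<alpha>) \<le> Phi k v"
    unfolding v_def v'_def by (rule Sprop) (simp add: vv_nn)
  have p3: "Phi k v \<le> A * dd \<mu>" using Suc by (simp add: v_def A_def \<mu>_def)
  have p4: "A * dd \<mu> \<le> A * Lg x' \<mu>"
    using Apos by (intro mult_left_mono F1w) (auto simp: x'_def xh_range)
  have p5: "A * Lg x' \<mu> + b * Lg x' v' = A' * Lg x' u"
    using Lg_comb[of A b x' \<mu> v'] Apos by (simp add: A'eq u_def)
  have p6: "Lg x' u = dd l' + G" by (simp add: x'_def G_def Lg_xh)
  have c1': "A * (real k + 3) = (real k + 1) * A'" by (simp add: A_def A'_def AA_def algebra_simps)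
  have c1: "A / A' = (real k + 1)/(real k + 3)"
    using Apos c1' by (simp add: frac_eq_eq)
  have c2': "b * (real k + 3) = 2 * A'" by (simp add: b_def A'_def AA_def aa_def algebra_simps)
  have c2: "b / A' = 2/(real k + 3)"
    using Apos c2' by (simp add: frac_eq_eq)
  have p7: "\<And>i. u i - l' i = (b/A') * (v' i - v i)"
  proof -
    fix i
    have "u i = A/A' * \<mu> i + b/A' * v' i" by (simp add: u_def add_divide_distrib)
    then show "u i - l' i = (b/A') * (v' i - v i)"
      by (simp add: l'_def lam_Suc c1 c2 \<mu>_def v_def add_divide_distrib diff_divide_distrib algebra_simps)
  qed
  have unn: "\<And>i. u i \<ge> 0" using Apos mu_nn vv_nn
    by (simp add: u_def \<mu>_def v'_def A'eq b_def aa_def A_def)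
  have p8: "dd l' + G - nrm (\<lambda>i. u i - l' i)/(2*\<alpha>) \<le> dd (mu (Suc k))"
    unfolding G_def x'_def mu_def l'_def[symmetric] by (rule Qmax) (simp add: unn)
  have p9: "A' * (nrm (\<lambda>i. u i - l' i)/(2*\<alpha>)) \<le> nrm (\<lambda>i. v' i - v i)/(2*\<alpha>)"
  proof -
    have "nrm (\<lambda>i. u i - l' i) = (b/A')^2 * nrm (\<lambda>i. v' i - v i)"
      using nrm_scale[of "b/A'" "\<lambda>i. v' i - v i"] p7 by simp
    moreover have "A' * (b/A')^2 \<le> 1"
    proof -
      have e1: "A' * (b/A')^2 = b^2/A'" using Apos by (simp add: power2_eq_square)
      have "b^2 \<le> A'"
      proof -
        have "b^2 = (real k + 2) * (real k + 2) / 4" by (simp add: b_def aa_def power2_eq_square add.commute)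
        also have "\<dots> \<le> (real k + 2) * (real k + 3) / 4" by (intro divide_right_mono mult_left_mono) auto
        also have "\<dots> = A'" by (simp add: A'_def AA_def algebra_simps)
        finally show ?thesis .
      qed
      then show ?thesis using Apos e1 by simp
    qed
    moreover have "(A' * (b/A')^2) * nrm (\<lambda>i. v' i - v i) \<le> nrm (\<lambda>i. v' i - v i)"
      by (rule mult_left_le_one_le) (use nrm_nonneg Apos calculation in auto)
    ultimately have "A' * nrm (\<lambda>i. u i - l' i) \<le> nrm (\<lambda>i. v' i - v i)"
      by (simp add: mult.assoc)
    then show ?thesis using apos by (simp add: divide_right_mono)
  qed
  have p10: "A' * (dd l' + G - nrm (\<lambda>i. u i - l' i)/(2*\<alpha>)) \<le> A' * dd (mu (Suc k))"
    using p8 Apos by (intro mult_left_mono) auto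
  have e: "A' * (dd l' + G - nrm (\<lambda>i. u i - l' i)/(2*\<alpha>)) = A' * Lg x' u - A' * (nrm (\<lambda>i. u i - l' i)/(2*\<alpha>))"
    by (simp add: p6 algebra_simps)
  show ?case using p1 p2 p3 p4 p5 p9 p10 e unfolding v'_def[symmetric] A'_def[symmetric] by linarith
qed

end

context fds begin

lemma Phi_le: assumes "\<And>i. i < N \<Longrightarrow> l i \<ge> 0" shows "Phi k l \<le> AA k * dd (mu k)"
proof -
  have "Phi k l + nrm (\<lambda>i. l i - vv k i)/(2*\<alpha>) \<le> Phi k (vv k)" by (rule Sprop) (use assms in auto)
  moreover have "nrm (\<lambda>i. l i - vv k i)/(2*\<alpha>) \<ge> 0" using nrm_nonneg apos by simp
  ultimately show ?thesis using Main[of k] by linarith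
qed

lemma zz_xb: "zz k i = AA k * (1 - Ax (xb k) i)"
proof -
  have "(\<Sum>t\<le>k. aa t * Ax (xh (lam t)) i) = (\<Sum>t\<le>k. \<Sum>j\<in>Om i. aa t * xh (lam t) j)"
    by (simp add: Ax_def sum_distrib_left)
  also have "\<dots> = (\<Sum>j\<in>Om i. \<Sum>t\<le>k. aa t * xh (lam t) j)" by (rule sum.swap)
  also have "\<dots> = (\<Sum>j\<in>Om i. AA k * xb k j)" by (simp add: XBinv)
  also have "\<dots> = AA k * Ax (xb k) i" by (simp add: Ax_def sum_distrib_left)
  finally have h: "(\<Sum>t\<le>k. aa t * Ax (xh (lam t)) i) = AA k * Ax (xb k) i" .
  have "zz k i = (\<Sum>t\<le>k. aa t) - (\<Sum>t\<le>k. aa t * Ax (xh (lam t)) i)"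
    by (simp add: Zinv gg_def algebra_simps sum_subtractf)
  then show ?thesis using h AA_sum by (simp add: algebra_simps)
qed

lemma ff_ge: "(\<Sum>j<N. x j) \<le> ff x"
  unfolding ff_def using dpos by (intro sum_mono) simp

lemma Phi_lower: "AA k * (\<Sum>j<N. xb k j) + (\<Sum>i<N. l i * (AA k * (1 - Ax (xb k) i)) - (l i)^2/(2*\<alpha>)) \<le> Phi k l"
proof -
  have "AA k * (\<Sum>j<N. xb k j) = (\<Sum>j<N. \<Sum>t\<le>k. aa t * xh (lam t) j)"
    by (simp add: sum_distrib_left XBinv)
  also have "\<dots> = (\<Sum>t\<le>k. \<Sum>j<N. aa t * xh (lam t) j)" by (rule sum.swap)
  also have "\<dots> = (\<Sum>t\<le>k. aa t * (\<Sum>j<N. xh (lam t) j))" by (simp add: sum_distrib_left)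
  also have "\<dots> \<le> (\<Sum>t\<le>k. aa t * ff (xh (lam t)))"
    by (intro sum_mono mult_left_mono ff_ge) (simp add: aa_def)
  finally show ?thesis by (simp add: Phi_form zz_xb)
qed

lemma dd_opt:
  assumes xs: "\<And>j. j < N \<Longrightarrow> 0 \<le> xs j \<and> xs j \<le> 1" and cov: "\<And>i. i < N \<Longrightarrow> Ax xs i \<ge> 1"
    and m: "\<And>i. i < N \<Longrightarrow> m i \<ge> 0"
  shows "dd m \<le> (1 + \<delta>/2) * (\<Sum>j<N. xs j)"
proof -
  have "dd m \<le> Lg xs m" by (rule F1w) (use xs in auto)
  also have "\<dots> \<le> ff xs"
  proof -
    have "(\<Sum>i<N. m i * gg xs i) \<le> 0"
      using m cov by (intro sum_nonpos) (auto simp: gg_def mult_nonneg_nonpos)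
    then show ?thesis by (simp add: Lg_def)
  qed
  also have "\<dots> \<le> (\<Sum>j<N. (1 + \<delta>/2) * xs j)"
    unfolding ff_def
  proof (intro sum_mono)
    fix j assume "j \<in> {..<N}"
    then have "0 \<le> xs j" "xs j \<le> 1" using xs by auto
    then have "(xs j)^2 \<le> xs j" by (simp add: power2_eq_square mult_left_le_one_le)
    then show "xs j + \<delta>/2 * (xs j)^2 \<le> (1 + \<delta>/2) * xs j"
      using dpos by (simp add: algebra_simps)
  qed
  also have "\<dots> = (1 + \<delta>/2) * (\<Sum>j<N. xs j)" by (simp add: sum_distrib_left)
  finally show ?thesis .
qed

lemma alg_x_eq: "alg_x N E \<delta> \<alpha> k i = xb k i + pos (1 - Ax (xb k) i)"
  by (simp add: alg_x_def Ax_def)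

lemma final_sum:
  assumes xs: "\<And>j. j < N \<Longrightarrow> 0 \<le> xs j \<and> xs j \<le> 1" and cov: "\<And>i. i < N \<Longrightarrow> Ax xs i \<ge> 1"
  shows "(\<Sum>i<N. alg_x N E \<delta> \<alpha> k i) \<le> (1 + \<delta>/2) * (\<Sum>j<N. xs j) + real N / (2 * (\<alpha> * AA k))"
proof -
  define s where "s = (\<lambda>i. pos (1 - Ax (xb k) i))"
  define c where "c = \<alpha> * AA k"
  have cpos: "c > 0" using apos AA_pos by (simp add: c_def)
  define l where "l = (\<lambda>i. c * s i)"
  have lnn: "\<And>i. l i \<ge> 0" using cpos by (simp add: l_def s_def pos_def)
  have trm: "\<And>i. l i * (AA k * (1 - Ax (xb k) i)) - (l i)^2/(2*\<alpha>) = AA k * (c/2 * (s i)^2)"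
  proof -
    fix i
    have ss: "s i * (1 - Ax (xb k) i) = (s i)^2" by (auto simp: s_def pos_def power2_eq_square max_def)
    have "l i * (AA k * (1 - Ax (xb k) i)) = c * AA k * (s i)^2"
      by (simp add: l_def ss[symmetric] algebra_simps)
    moreover have "(l i)^2/(2*\<alpha>) = AA k * (c/2 * (s i)^2)"
      using apos by (simp add: l_def c_def power2_eq_square field_simps)
    moreover have "c * AA k * (s i)^2 - AA k * (c/2 * (s i)^2) = AA k * (c/2 * (s i)^2)"
      by (simp add: algebra_simps)
    ultimately show "l i * (AA k * (1 - Ax (xb k) i)) - (l i)^2/(2*\<alpha>) = AA k * (c/2 * (s i)^2)"
      by linarith
  qed
  have "AA k * (\<Sum>j<N. xb k j) + AA k * (\<Sum>i<N. c/2 * (s i)^2) \<le> Phi k l"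
    using Phi_lower[of k l] by (simp add: trm sum_distrib_left)
  also have "\<dots> \<le> AA k * dd (mu k)" by (rule Phi_le) (simp add: lnn)
  also have "\<dots> \<le> AA k * ((1 + \<delta>/2) * (\<Sum>j<N. xs j))"
    using AA_pos[of k] dd_opt[OF xs cov, of "mu k"] mu_nn by (intro mult_left_mono) auto
  finally have "AA k * ((\<Sum>j<N. xb k j) + (\<Sum>i<N. c/2 * (s i)^2)) \<le> AA k * ((1 + \<delta>/2) * (\<Sum>j<N. xs j))"
    by (simp add: algebra_simps)
  then have h1: "(\<Sum>j<N. xb k j) + (\<Sum>i<N. c/2 * (s i)^2) \<le> (1 + \<delta>/2) * (\<Sum>j<N. xs j)"
    using AA_pos[of k] by (simp add: mult_le_cancel_left_pos)
  have h2: "(\<Sum>i<N. s i) \<le> (\<Sum>i<N. c/2 * (s i)^2) + real N / (2*c)"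
  proof -
    have "(\<Sum>i<N. s i) \<le> (\<Sum>i<N. c/2 * (s i)^2 + 1/(2*c))"
      using quad_scalar[OF cpos] by (intro sum_mono) (simp add: algebra_simps)
    then show ?thesis by (simp add: sum.distrib)
  qed
  have "(\<Sum>i<N. alg_x N E \<delta> \<alpha> k i) = (\<Sum>j<N. xb k j) + (\<Sum>i<N. s i)"
    by (simp add: alg_x_eq s_def sum.distrib)
  then show ?thesis using h1 h2 by (simp add: c_def)
qed

end

context fds begin

lemma adj_sum: assumes "i < N" shows "(\<Sum>j<N. adjA E i j * x j) = Ax x i"
proof -
  have "(\<Sum>j<N. adjA E i j * x j) = (\<Sum>j<N. if j \<in> Om i then x j else 0)"
    using assms by (intro sum.cong) (auto simp: adjA_def Omega_def)
  then show ?thesis by (simp add: Ax_def sum_Om)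
qed

lemma alg_feasible: "fds_feasible N E (alg_x N E \<delta> \<alpha> k)"
  unfolding fds_feasible_def
proof (intro conjI allI impI)
  fix i assume i: "i < N"
  have nn: "\<And>j. pos (1 - Ax (xb k) j) \<ge> 0" by (simp add: pos_def)
  have "Ax (alg_x N E \<delta> \<alpha> k) i = Ax (xb k) i + (\<Sum>j\<in>Om i. pos (1 - Ax (xb k) j))"
    by (simp add: Ax_def alg_x_eq sum.distrib)
  also have "\<dots> \<ge> Ax (xb k) i + pos (1 - Ax (xb k) i)"
    using member_le_sum[of i "Om i" "\<lambda>j. pos (1 - Ax (xb k) j)"] self_Om[OF i] nn fin_Om by auto
  finally have "Ax (alg_x N E \<delta> \<alpha> k) i \<ge> 1" by (simp add: pos_def)
  then show "1 \<le> (\<Sum>j<N. adjA E i j * alg_x N E \<delta> \<alpha> k j)" using adj_sum[OF i] by simp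
next
  fix i assume "i < N"
  show "0 \<le> alg_x N E \<delta> \<alpha> k i" using xb_nn[of k i] by (simp add: alg_x_eq pos_def)
qed

lemma opt_le1: assumes opt: "fds_optimal N E xs" and j: "j < N" shows "xs j \<le> 1"
proof (rule ccontr)
  assume "\<not> xs j \<le> 1"
  then have g: "xs j > 1" by simp
  define y where "y = xs(j := 1)"
  have feas: "fds_feasible N E xs" using opt by (simp add: fds_optimal_def)
  have xsnn: "\<And>i. i < N \<Longrightarrow> xs i \<ge> 0" using feas by (simp add: fds_feasible_def)
  have "fds_feasible N E y"
    unfolding fds_feasible_def
  proof (intro conjI allI impI)
    fix i assume i: "i < N"
    have "Ax y i \<ge> 1"
    proof (cases "j \<in> Om i")
      case True
      have "y j \<le> Ax y i" unfolding Ax_def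
        using True fin_Om Om_sub xsnn by (intro member_le_sum) (auto simp: y_def)
      then show ?thesis by (simp add: y_def)
    next
      case False
      then have "Ax y i = Ax xs i" unfolding Ax_def y_def by (intro sum.cong) auto
      moreover have "Ax xs i \<ge> 1" using feas i adj_sum[OF i, of xs] unfolding fds_feasible_def by metis
      ultimately show ?thesis by simp
    qed
    then show "1 \<le> (\<Sum>ja<N. adjA E i ja * y ja)" using adj_sum[OF i] by simp
  next
    fix i assume "i < N" then show "0 \<le> y i" using xsnn by (simp add: y_def)
  qed
  moreover have "(\<Sum>i<N. y i) < (\<Sum>i<N. xs i)"
    using j g by (intro sum_strict_mono_ex1) (auto simp: y_def)
  ultimately show False using opt by (auto simp: fds_optimal_def)
qed

lemma N_le: assumes xs: "\<And>j. j < N \<Longrightarrow> 0 \<le> xs j" and cov: "\<And>i. i < N \<Longrightarrow> Ax xs i \<ge> 1"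
  shows "real N \<le> D * (\<Sum>j<N. xs j)"
proof -
  have "real N = (\<Sum>i<N. 1)" by simp
  also have "\<dots> \<le> (\<Sum>i<N. Ax xs i)" using cov by (intro sum_mono) auto
  also have "\<dots> = (\<Sum>i<N. \<Sum>j\<in>Om i. xs j)" by (simp add: Ax_def)
  also have "\<dots> = (\<Sum>j<N. \<Sum>i\<in>Om j. xs j)" by (rule swap)
  also have "\<dots> = (\<Sum>j<N. card (Om j) * xs j)" by simp
  also have "\<dots> \<le> (\<Sum>j<N. D * xs j)"
    using card_Om xs by (intro sum_mono mult_right_mono) auto
  also have "\<dots> = D * (\<Sum>j<N. xs j)" by (simp add: sum_distrib_left)
  finally show ?thesis .
qed

lemma rate: "1/(\<delta> * AA k) \<le> 32 * (1 + 1/\<delta>) * (1/(real k + 1)^2)"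
proof -
  have k: "real k + 1 > 0" by simp
  have "1/(\<delta> * AA k) = 4 / (\<delta> * ((real k + 1) * (real k + 2)))" by (simp add: AA_def)
  also have "\<dots> \<le> 4 / (\<delta> * ((real k + 1) * (real k + 1)))"
    using dpos k by (intro divide_left_mono mult_left_mono mult_pos_pos) auto
  also have "\<dots> = (4/\<delta>) * (1/(real k + 1)^2)" by (simp add: power2_eq_square)
  also have "\<dots> \<le> 32 * (1 + 1/\<delta>) * (1/(real k + 1)^2)"
    using dpos by (intro mult_right_mono) (auto simp: field_simps)
  finally show ?thesis .
qed

end

theorem theorem1:
  fixes N :: nat and E :: "nat set set" and xstar :: "nat \<Rightarrow> real" and \<delta> \<alpha> :: real
  assumes "is_graph N E"
    and "fds_optimal N E xstar"
    and "\<delta> > 0"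
    and "\<alpha> = \<delta> / (2 * (real (dmax N E) + 1) ^ 2)"
  shows "\<forall>k. fds_feasible N E (alg_x N E \<delta> \<alpha> k) \<and>
     ((\<Sum>i<N. alg_x N E \<delta> \<alpha> k i) - (\<Sum>i<N. xstar i)) / (\<Sum>i<N. xstar i)
       \<le> 32 * (real (dmax N E) + 1) ^ 3 * (1 + 1 / \<delta>) * (1 / (real k + 1) ^ 2) + \<delta> / 2"
proof
  fix k
  interpret fds N E \<delta> \<alpha> using assms(3,4) by unfold_locales
  have feas: "fds_feasible N E xstar" using assms(2) by (simp add: fds_optimal_def)
  have xs01: "\<And>j. j < N \<Longrightarrow> 0 \<le> xstar j \<and> xstar j \<le> 1"
    using feas opt_le1[OF assms(2)] by (auto simp: fds_feasible_def)
  have cov: "\<And>i. i < N \<Longrightarrow> Ax xstar i \<ge> 1"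
    using feas adj_sum by (auto simp: fds_feasible_def)
  define opt where "opt = (\<Sum>i<N. xstar i)"
  define S where "S = (\<Sum>i<N. alg_x N E \<delta> \<alpha> k i)"
  have DD: "D = real (dmax N E) + 1" by (simp add: D_def)
  have rhs_nn: "0 \<le> 32 * D ^ 3 * (1 + 1 / \<delta>) * (1 / (real k + 1) ^ 2) + \<delta> / 2"
    using Dpos assms(3) by (intro add_nonneg_nonneg mult_nonneg_nonneg) auto
  have bound: "(S - opt)/opt \<le> 32 * D ^ 3 * (1 + 1 / \<delta>) * (1 / (real k + 1) ^ 2) + \<delta> / 2"
  proof (cases "N = 0")
    case True
    then show ?thesis using rhs_nn by (simp add: opt_def S_def)
  next
    case False
    have NleD: "real N \<le> D * opt" unfolding opt_def by (rule N_le) (use xs01 cov in auto)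
    have optpos: "opt > 0"
    proof -
      have "real N > 0" using False by simp
      then have "D * opt > 0" using NleD by linarith
      then show ?thesis using Dpos by (simp add: zero_less_mult_iff)
    qed
    have Sb: "S \<le> (1 + \<delta>/2) * opt + real N / (2 * (\<alpha> * AA k))"
      unfolding S_def opt_def by (rule final_sum) (use xs01 cov in auto)
    have cpos: "2 * (\<alpha> * AA k) > 0" using apos AA_pos by simp
    have "(S - opt)/opt \<le> ((\<delta>/2) * opt + real N / (2 * (\<alpha> * AA k)))/opt"
      using Sb optpos by (intro divide_right_mono) (auto simp: algebra_simps)
    also have "\<dots> = \<delta>/2 + (real N / opt) / (2 * (\<alpha> * AA k))"
      using optpos by (simp add: field_simps)
    also have "\<dots> \<le> \<delta>/2 + D / (2 * (\<alpha> * AA k))"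
    proof -
      have "real N / opt \<le> D" using NleD optpos by (simp add: divide_le_eq mult.commute)
      then have "(real N / opt) / (2 * (\<alpha> * AA k)) \<le> D / (2 * (\<alpha> * AA k))"
        using cpos by (intro divide_right_mono) auto
      then show ?thesis by linarith
    qed
    also have "D / (2 * (\<alpha> * AA k)) = D^3 * (1/(\<delta> * AA k))"
      using Dpos dpos AA_pos[of k] by (simp add: aD field_simps power2_eq_square power3_eq_cube)
    also have "\<dots> \<le> D^3 * (32 * (1 + 1/\<delta>) * (1/(real k + 1)^2))"
      using rate[of k] Dpos by (intro mult_left_mono) auto
    finally show ?thesis by (simp add: algebra_simps)
  qed
  show "fds_feasible N E (alg_x N E \<delta> \<alpha> k) \<and>
     ((\<Sum>i<N. alg_x N E \<delta> \<alpha> k i) - (\<Sum>i<N. xstar i)) / (\<Sum>i<N. xstar i)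
       \<le> 32 * (real (dmax N E) + 1) ^ 3 * (1 + 1 / \<delta>) * (1 / (real k + 1) ^ 2) + \<delta> / 2"
    using alg_feasible bound by (simp add: S_def opt_def DD)
qed


end
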